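(* Let $\sigma\in\mathcal E$ be a coordinated equilibrium strategy of $\langle\Gamma,M\rangle$. Then $\pi(\sigma,\sigma)\le\max\{\pi(\sigma_L,\sigma_L),\pi(\sigma_R,\sigma_R)\}$.
   Context: Game $\langle\Gamma,M\rangle$. Two players; each player's type is drawn independently from a distribution on $U=[0,1]$ with continuous CDF $F$ and density $f$ with $f(u)>0$ for all $u\in[0,1]$. Each player chooses an action in $\{L,R\}$; a player of type $u$ gets $1-u$ if both choose $L$, $u$ if both choose $R$, and $0$ otherwise. Before choosing actions, players simultaneously send publicly observed costless messages from a finite set $M$ with $|M|\ge4$. A strategy is $\sigma=(\mu,\xi)$ with $\mu:U\to\Delta(M)$ measurable ($\mu_u(m)$ = probability type $u$ sends $m$) and $\xi:M\times M\to[0,1]$: a player who sent $m$ and observes $m'$ plays $L$ iff her type $u\le\xi(m,m')$. $\Sigma$ is the set of strategies. $\bar\mu(m)=\int_0^1\mu_u(m)f(u)du$, $\mathrm{supp}(\bar\mu)=\{m:\bar\mu(m)>0\}$. Write $\xi(m,m')=L$ if $\xi(m,m')\ge\sup\{u:\mu_u(m)>0\}$ and $\xi(m,m')=R$ if $\xi(m,m')\le\inf\{u:\mu_u(m)>0\}$. Payoffs: $\pi_{u,v}(\sigma,\sigma')=\sum_{m,m'}\mu_u(m)\mu'_v(m')[(1-u)\mathbf 1\{u\le\xi(m,m')\}\mathbf 1\{v\le\xi'(m',m)\}+u\mathbf 1\{u>\xi(m,m')\}\mathbf 1\{v>\xi'(m',m)\}]$, $\pi_u(\sigma,\sigma')=\int_0^1\pi_{u,v}(\sigma,\sigma')f(v)dv$,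 $\pi(\sigma,\sigma')=\int_0^1\pi_u(\sigma,\sigma')f(u)du$. $\sigma\in\mathcal E$ (equilibrium strategy) if $\pi_u(\sigma,\sigma)\ge\pi_u(\sigma',\sigma)$ for all $u$, $\sigma'$. $\sigma$ is coordinated if for all $m,m'\in\mathrm{supp}(\bar\mu)$, either $\xi(m,m')=\xi(m',m)=L$ or $\xi(m,m')=\xi(m',m)=R$. Fix distinct $m_L,m_R\in M$. $\mu^*(u)=m_L$ (with probability one) if $u\le1/2$ and $\mu^*(u)=m_R$ if $u>1/2$. $\xi_L(m,m')=0$ if $m=m'=m_R$ and $1$ otherwise; $\xi_R(m,m')=1$ if $m=m'=m_L$ and $0$ otherwise. $\sigma_L=(\mu^*,\xi_L)$, $\sigma_R=(\mu^*,\xi_R)$. *)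

theory Defs
  imports "HOL-Analysis.Analysis"
begin

text \<open>A strategy sigma = (mu, xi): mu u m is the probability that type u sends message m,
  xi m m' is the cutoff (a player who sent m and observes m' plays L iff u \<le> xi m m').\<close>
type_synonym 'm strat = "(real \<Rightarrow> 'm \<Rightarrow> real) \<times> ('m \<Rightarrow> 'm \<Rightarrow> real)"

definition Sigma_set :: "'m::finite strat set" where
  "Sigma_set = {(\<mu>, \<xi>).
      (\<forall>m. (\<lambda>u. \<mu> u m) \<in> borel_measurable lborel) \<and>
      (\<forall>u\<in>{0..1}. (\<forall>m. \<mu> u m \<ge> 0) \<and> (\<Sum>m\<in>UNIV. \<mu> u m) = 1) \<and>
      (\<forall>m m'. \<xi> m m' \<in> {0..1})}"

definition pi_uv :: "'m::finite strat \<Rightarrow> 'm strat \<Rightarrow> real \<Rightarrow> real \<Rightarrow> real" where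
  "pi_uv \<sigma> \<sigma>' u v =
     (\<Sum>m\<in>UNIV. \<Sum>m'\<in>UNIV. fst \<sigma> u m * fst \<sigma>' v m' *
        ((1 - u) * (if u \<le> snd \<sigma> m m' then 1 else 0) * (if v \<le> snd \<sigma>' m' m then 1 else 0)
         + u * (if u > snd \<sigma> m m' then 1 else 0) * (if v > snd \<sigma>' m' m then 1 else 0)))"

definition pi_u :: "(real \<Rightarrow> real) \<Rightarrow> 'm::finite strat \<Rightarrow> 'm strat \<Rightarrow> real \<Rightarrow> real" where
  "pi_u f \<sigma> \<sigma>' u = (LINT v:{0..1}|lborel. pi_uv \<sigma> \<sigma>' u v * f v)"

definition pi_tot :: "(real \<Rightarrow> real) \<Rightarrow> 'm::finite strat \<Rightarrow> 'm strat \<Rightarrow> real" where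
  "pi_tot f \<sigma> \<sigma>' = (LINT u:{0..1}|lborel. pi_u f \<sigma> \<sigma>' u * f u)"

definition equilibrium :: "(real \<Rightarrow> real) \<Rightarrow> 'm::finite strat \<Rightarrow> bool" where
  "equilibrium f \<sigma> \<longleftrightarrow> \<sigma> \<in> Sigma_set \<and>
     (\<forall>u\<in>{0..1}. \<forall>\<sigma>'\<in>Sigma_set. pi_u f \<sigma> \<sigma> u \<ge> pi_u f \<sigma>' \<sigma> u)"

definition mu_bar :: "(real \<Rightarrow> real) \<Rightarrow> (real \<Rightarrow> 'm \<Rightarrow> real) \<Rightarrow> 'm \<Rightarrow> real" where
  "mu_bar f \<mu> m = (LINT u:{0..1}|lborel. \<mu> u m * f u)"

text \<open>xi(m,m') = L and xi(m,m') = R, relative to the types in [0,1] that send m.\<close>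
definition is_L :: "'m strat \<Rightarrow> 'm \<Rightarrow> 'm \<Rightarrow> bool" where
  "is_L \<sigma> m m' \<longleftrightarrow> snd \<sigma> m m' \<ge> Sup {u\<in>{0..1}. fst \<sigma> u m > 0}"

definition is_R :: "'m strat \<Rightarrow> 'm \<Rightarrow> 'm \<Rightarrow> bool" where
  "is_R \<sigma> m m' \<longleftrightarrow> snd \<sigma> m m' \<le> Inf {u\<in>{0..1}. fst \<sigma> u m > 0}"

definition coordinated :: "(real \<Rightarrow> real) \<Rightarrow> 'm::finite strat \<Rightarrow> bool" where
  "coordinated f \<sigma> \<longleftrightarrow> (\<forall>m m'. mu_bar f (fst \<sigma>) m > 0 \<longrightarrow> mu_bar f (fst \<sigma>) m' > 0 \<longrightarrow>
      (is_L \<sigma> m m' \<and> is_L \<sigma> m' m) \<or> (is_R \<sigma> m m' \<and> is_R \<sigma> m' m))"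

definition mu_star :: "'m \<Rightarrow> 'm \<Rightarrow> real \<Rightarrow> 'm \<Rightarrow> real" where
  "mu_star mL mR u m = (if u \<le> 1/2 then (if m = mL then 1 else 0) else (if m = mR then 1 else 0))"

definition xi_L :: "'m \<Rightarrow> 'm \<Rightarrow> 'm \<Rightarrow> real" where
  "xi_L mR m m' = (if m = mR \<and> m' = mR then 0 else 1)"

definition xi_R :: "'m \<Rightarrow> 'm \<Rightarrow> 'm \<Rightarrow> real" where
  "xi_R mL m m' = (if m = mL \<and> m' = mL then 1 else 0)"

definition sigma_L :: "'m \<Rightarrow> 'm \<Rightarrow> 'm strat" where
  "sigma_L mL mR = (mu_star mL mR, xi_L mR)"

definition sigma_R :: "'m \<Rightarrow> 'm \<Rightarrow> 'm strat" where
  "sigma_R mL mR = (mu_star mL mR, xi_R mL)"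

end

theory Submission
  imports Defs
begin

locale game =
  fixes f :: "real \<Rightarrow> real"
  assumes f_meas[measurable]: "f \<in> borel_measurable lborel"
    and f_pos: "\<forall>u\<in>{0..1}. f u > 0"
    and f_int: "set_integrable lborel {0..1} f"
    and f_one: "(LINT u:{0..1}|lborel. f u) = 1"
begin

definition fi :: "real \<Rightarrow> real" where "fi u = indicator {0..1} u * f u"

lemma fi_meas[measurable]: "fi \<in> borel_measurable lborel" unfolding fi_def by measurable

lemma fi_int: "integrable lborel fi"
  using f_int unfolding set_integrable_def fi_def by simp

lemma fi_nonneg: "fi u \<ge> 0"
  using f_pos unfolding fi_def by (auto simp: indicator_def less_imp_le)

lemma fi_out: "u \<notin> {0..1} \<Longrightarrow> fi u = 0"
  unfolding fi_def by simp

lemma fi_in: "u \<in> {0..1} \<Longrightarrow> fi u = f u"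
  unfolding fi_def by simp

lemma set_int_fi: "(LINT v:{0..1}|lborel. g v * f v) = integral\<^sup>L lborel (\<lambda>v. g v * fi v)"
  unfolding set_lebesgue_integral_def fi_def by (simp add: mult_ac)

lemma fi_one: "integral\<^sup>L lborel fi = 1"
  using f_one unfolding set_lebesgue_integral_def fi_def by (simp add: mult_ac)

lemma int_bdd:
  assumes "g \<in> borel_measurable lborel" "\<And>x. x\<in>{0..1} \<Longrightarrow> \<bar>g x\<bar> \<le> C"
  shows "integrable lborel (\<lambda>x. g x * fi x)"
proof (rule Bochner_Integration.integrable_bound[OF integrable_mult_right[OF fi_int, of C]])
  show "(\<lambda>x. g x * fi x) \<in> borel_measurable lborel" using assms(1) by measurable
  show "AE x in lborel. norm (g x * fi x) \<le> norm (C * fi x)"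
  proof (rule AE_I2)
    fix x
    show "norm (g x * fi x) \<le> norm (C * fi x)"
    proof (cases "x \<in> {0..1}")
      case True
      then have "\<bar>g x\<bar> * fi x \<le> C * fi x" using assms(2) fi_nonneg by (simp add: mult_right_mono)
      then show ?thesis using fi_nonneg[of x] by (simp add: abs_mult) (smt (verit) mult_right_mono abs_ge_self)
    next
      case False then show ?thesis by (simp add: fi_out)
    qed
  qed
qed

lemma strat_meas[measurable]: "\<sigma> \<in> Sigma_set \<Longrightarrow> (\<lambda>u. fst \<sigma> u m) \<in> borel_measurable lborel"
  by (cases \<sigma>) (auto simp: Sigma_set_def)
lemma strat_nonneg: "\<sigma> \<in> Sigma_set \<Longrightarrow> u \<in> {0..1} \<Longrightarrow> fst \<sigma> u m \<ge> 0"
  by (cases \<sigma>) (auto simp: Sigma_set_def)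
lemma strat_sum: "\<sigma> \<in> Sigma_set \<Longrightarrow> u \<in> {0..1} \<Longrightarrow> (\<Sum>m\<in>UNIV. fst \<sigma> u m) = 1"
  by (cases \<sigma>) (auto simp: Sigma_set_def)
lemma strat_le1: "(\<sigma>::'m::finite strat) \<in> Sigma_set \<Longrightarrow> u \<in> {0..1} \<Longrightarrow> fst \<sigma> u m \<le> 1"
proof -
  assume a: "\<sigma> \<in> Sigma_set" "u \<in> {0..1}"
  have "fst \<sigma> u m \<le> (\<Sum>m\<in>UNIV. fst \<sigma> u m)"
    by (rule member_le_sum) (auto intro: strat_nonneg[OF a(1) a(2)])
  then show ?thesis using strat_sum[OF a] by simp
qed
lemma strat_abs: "(\<sigma>::'m::finite strat) \<in> Sigma_set \<Longrightarrow> u \<in> {0..1} \<Longrightarrow> \<bar>fst \<sigma> u m\<bar> \<le> 1"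
  using strat_le1 strat_nonneg by fastforce

definition P :: "'m::finite strat \<Rightarrow> 'm \<Rightarrow> real" where
  "P \<sigma> m = integral\<^sup>L lborel (\<lambda>u. fst \<sigma> u m * fi u)"
definition KL :: "'m::finite strat \<Rightarrow> 'm \<Rightarrow> 'm \<Rightarrow> real" where
  "KL \<sigma> m m' = integral\<^sup>L lborel (\<lambda>v. fst \<sigma> v m * (if v \<le> snd \<sigma> m m' then 1 else 0) * fi v)"
definition KR :: "'m::finite strat \<Rightarrow> 'm \<Rightarrow> 'm \<Rightarrow> real" where
  "KR \<sigma> m m' = integral\<^sup>L lborel (\<lambda>v. fst \<sigma> v m * (if v > snd \<sigma> m m' then 1 else 0) * fi v)"

lemma intP: "\<sigma> \<in> Sigma_set \<Longrightarrow> integrable lborel (\<lambda>u. fst \<sigma> u m * fi u)"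
  by (rule int_bdd[where C=1]) (auto intro: strat_abs)
lemma intKL: "\<sigma> \<in> Sigma_set \<Longrightarrow> integrable lborel (\<lambda>v. fst \<sigma> v m * (if v \<le> c then 1 else 0) * fi v)"
  by (rule int_bdd[where C=1]) (auto intro: strat_abs)
lemma intKR: "\<sigma> \<in> Sigma_set \<Longrightarrow> integrable lborel (\<lambda>v. fst \<sigma> v m * (if v > c then 1 else 0) * fi v)"
  by (rule int_bdd[where C=1]) (auto intro: strat_abs)

lemma nonneg_prod: "\<sigma> \<in> Sigma_set \<Longrightarrow> g \<ge> 0 \<Longrightarrow> fst \<sigma> v m * g * fi v \<ge> 0"
  by (cases "v \<in> {0..1}") (auto simp: fi_out intro!: mult_nonneg_nonneg strat_nonneg fi_nonneg)

lemma P_nonneg: "\<sigma> \<in> Sigma_set \<Longrightarrow> P \<sigma> m \<ge> 0"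
  unfolding P_def using nonneg_prod[of \<sigma> 1] by (intro Bochner_Integration.integral_nonneg) auto
lemma KL_nonneg: "\<sigma> \<in> Sigma_set \<Longrightarrow> KL \<sigma> m m' \<ge> 0"
  unfolding KL_def by (rule Bochner_Integration.integral_nonneg, rule nonneg_prod) auto
lemma KR_nonneg: "\<sigma> \<in> Sigma_set \<Longrightarrow> KR \<sigma> m m' \<ge> 0"
  unfolding KR_def by (rule Bochner_Integration.integral_nonneg, rule nonneg_prod) auto

lemma KL_KR: "\<sigma> \<in> Sigma_set \<Longrightarrow> KL \<sigma> m m' + KR \<sigma> m m' = P \<sigma> m"
proof -
  assume s: "\<sigma> \<in> Sigma_set"
  have "KL \<sigma> m m' + KR \<sigma> m m' = integral\<^sup>L lborel (\<lambda>v. fst \<sigma> v m * (if v \<le> snd \<sigma> m m' then 1 else 0) * fi v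
     + fst \<sigma> v m * (if v > snd \<sigma> m m' then 1 else 0) * fi v)"
    unfolding KL_def KR_def by (rule Bochner_Integration.integral_add[symmetric]) (auto intro!: intKL intKR s)
  also have "\<dots> = P \<sigma> m" unfolding P_def
    by (rule Bochner_Integration.integral_cong) auto
  finally show ?thesis .
qed

lemma mu_bar_P: "mu_bar f (fst \<sigma>) m = P \<sigma> m"
  unfolding mu_bar_def P_def set_int_fi ..

lemma sum_P: "(\<sigma>::'m::finite strat) \<in> Sigma_set \<Longrightarrow> (\<Sum>m\<in>UNIV. P \<sigma> m) = 1"
proof -
  assume a: "\<sigma> \<in> Sigma_set"
  have "(\<Sum>m\<in>UNIV. P \<sigma> m) = integral\<^sup>L lborel (\<lambda>u. \<Sum>m\<in>UNIV. fst \<sigma> u m * fi u)"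
    unfolding P_def by (subst Bochner_Integration.integral_sum) (auto intro: intP[OF a])
  also have "\<dots> = integral\<^sup>L lborel fi"
  proof (rule Bochner_Integration.integral_cong[OF refl])
    fix u show "(\<Sum>m\<in>UNIV. fst \<sigma> u m * fi u) = fi u"
      by (cases "u \<in> {0..1}") (auto simp: fi_out strat_sum[OF a] simp flip: sum_distrib_right)
  qed
  finally show ?thesis using fi_one by simp
qed

lemma pi_u_fi: "pi_u f \<sigma>' \<sigma> u = integral\<^sup>L lborel (\<lambda>v. pi_uv \<sigma>' \<sigma> u v * fi v)"
  unfolding pi_u_def set_int_fi ..

lemma EL:
  fixes \<sigma> \<sigma>' :: "'m::finite strat"
  assumes s: "\<sigma> \<in> Sigma_set"
  shows "pi_u f \<sigma>' \<sigma> u = (\<Sum>m\<in>UNIV. \<Sum>m'\<in>UNIV. fst \<sigma>' u m *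
     ((1-u) * (if u \<le> snd \<sigma>' m m' then 1 else 0) * KL \<sigma> m' m
      + u * (if u > snd \<sigma>' m m' then 1 else 0) * KR \<sigma> m' m))"
proof -
  have "pi_u f \<sigma>' \<sigma> u = integral\<^sup>L lborel (\<lambda>v. \<Sum>m\<in>UNIV. \<Sum>m'\<in>UNIV.
     (fst \<sigma>' u m * (1-u) * (if u \<le> snd \<sigma>' m m' then 1 else 0)) *
       (fst \<sigma> v m' * (if v \<le> snd \<sigma> m' m then 1 else 0) * fi v)
   + (fst \<sigma>' u m * u * (if u > snd \<sigma>' m m' then 1 else 0)) *
       (fst \<sigma> v m' * (if v > snd \<sigma> m' m then 1 else 0) * fi v))"
    unfolding pi_u_fi
  proof (rule Bochner_Integration.integral_cong[OF refl])
    fix v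
    show "pi_uv \<sigma>' \<sigma> u v * fi v = (\<Sum>m\<in>UNIV. \<Sum>m'\<in>UNIV.
     (fst \<sigma>' u m * (1-u) * (if u \<le> snd \<sigma>' m m' then 1 else 0)) *
       (fst \<sigma> v m' * (if v \<le> snd \<sigma> m' m then 1 else 0) * fi v)
   + (fst \<sigma>' u m * u * (if u > snd \<sigma>' m m' then 1 else 0)) *
       (fst \<sigma> v m' * (if v > snd \<sigma> m' m then 1 else 0) * fi v))"
      unfolding pi_uv_def sum_distrib_right
      by (intro sum.cong refl) (simp add: algebra_simps)
  qed
  also have "\<dots> = (\<Sum>m\<in>UNIV. \<Sum>m'\<in>UNIV. fst \<sigma>' u m *
     ((1-u) * (if u \<le> snd \<sigma>' m m' then 1 else 0) * KL \<sigma> m' m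
      + u * (if u > snd \<sigma>' m m' then 1 else 0) * KR \<sigma> m' m))"
  proof -
    have i1: "integrable lborel (\<lambda>v. c * (fst \<sigma> v m' * (if v \<le> d then 1 else 0) * fi v))" for c d m'
      by (rule integrable_mult_right) (rule intKL[OF s])
    have i2: "integrable lborel (\<lambda>v. c * (fst \<sigma> v m' * (if v > d then 1 else 0) * fi v))" for c d m'
      by (rule integrable_mult_right) (rule intKR[OF s])
    have i3: "integrable lborel (\<lambda>v. fst \<sigma>' u m * (1 - u) * (if u \<le> snd \<sigma>' m m' then 1 else 0) *
            (fst \<sigma> v m' * (if v \<le> snd \<sigma> m' m then 1 else 0) * fi v) +
            fst \<sigma>' u m * u * (if snd \<sigma>' m m' < u then 1 else 0) *
            (fst \<sigma> v m' * (if snd \<sigma> m' m < v then 1 else 0) * fi v))" for m m'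
      by (intro Bochner_Integration.integrable_add i1 i2)
    show ?thesis
      apply (subst Bochner_Integration.integral_sum)
       apply (rule Bochner_Integration.integrable_sum, rule i3)
      apply (rule sum.cong[OF refl])
      apply (subst Bochner_Integration.integral_sum)
       apply (rule i3)
      apply (rule sum.cong[OF refl])
      apply (subst Bochner_Integration.integral_add, rule i1, rule i2)
      apply (simp only: integral_mult_right_zero KL_def KR_def)
      apply (simp add: algebra_simps)
      done
  qed
  finally show ?thesis .
qed

definition sendset :: "'m strat \<Rightarrow> 'm \<Rightarrow> real set" where
  "sendset \<sigma> m = {u\<in>{0..1}. fst \<sigma> u m > 0}"

definition cc :: "'m strat \<Rightarrow> 'm \<Rightarrow> 'm \<Rightarrow> bool" where
  "cc \<sigma> m m' \<longleftrightarrow> is_L \<sigma> m m' \<and> is_L \<sigma> m' m"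

definition aa :: "'m::finite strat \<Rightarrow> 'm \<Rightarrow> real" where
  "aa \<sigma> m = (\<Sum>m'\<in>UNIV. P \<sigma> m' * (if cc \<sigma> m m' then 1 else 0))"

lemma cc_sym: "cc \<sigma> m m' = cc \<sigma> m' m" unfolding cc_def by auto

lemma sendset_bdd: "bdd_above (sendset \<sigma> m)" "bdd_below (sendset \<sigma> m)"
  unfolding sendset_def by (auto intro: bdd_above_Icc[THEN bdd_above_mono] bdd_below_Icc[THEN bdd_below_mono])

lemma isL_le: "is_L \<sigma> m m' \<Longrightarrow> u \<in> sendset \<sigma> m \<Longrightarrow> u \<le> snd \<sigma> m m'"
  unfolding is_L_def sendset_def[symmetric]
  by (meson cSup_upper sendset_bdd(1) order_trans)

lemma isR_ge: "is_R \<sigma> m m' \<Longrightarrow> u \<in> sendset \<sigma> m \<Longrightarrow> snd \<sigma> m m' \<le> Inf (sendset \<sigma> m)"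
  unfolding is_R_def sendset_def by simp

lemma sendset_Inf: "u \<in> sendset \<sigma> m \<Longrightarrow> Inf (sendset \<sigma> m) \<le> u"
  by (meson cInf_lower sendset_bdd(2))

lemma in_sendset: "\<sigma> \<in> Sigma_set \<Longrightarrow> u \<in> {0..1} \<Longrightarrow> fst \<sigma> u m \<noteq> 0 \<Longrightarrow> u \<in> sendset \<sigma> m"
  unfolding sendset_def using strat_nonneg[of \<sigma> u m] by auto

lemma KL_isL: assumes s: "\<sigma> \<in> Sigma_set" and L: "is_L \<sigma> m m'" shows "KL \<sigma> m m' = P \<sigma> m"
  unfolding KL_def P_def
proof (rule Bochner_Integration.integral_cong[OF refl])
  fix v
  show "fst \<sigma> v m * (if v \<le> snd \<sigma> m m' then 1 else 0) * fi v = fst \<sigma> v m * fi v"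
  proof (cases "v \<in> {0..1} \<and> fst \<sigma> v m \<noteq> 0")
    case True
    then have "v \<le> snd \<sigma> m m'" using isL_le[OF L in_sendset[OF s]] by auto
    then show ?thesis by simp
  next
    case False then show ?thesis by (auto simp: fi_out)
  qed
qed

lemma KL_isR: assumes s: "\<sigma> \<in> Sigma_set" and R: "is_R \<sigma> m m'" shows "KL \<sigma> m m' = 0"
  unfolding KL_def
proof (rule integral_eq_zero_AE)
  show "AE v in lborel. fst \<sigma> v m * (if v \<le> snd \<sigma> m m' then 1 else 0) * fi v = 0"
    using AE_lborel_singleton[of "snd \<sigma> m m'"]
  proof eventually_elim
    case (elim v)
    show ?case
    proof (cases "v \<in> {0..1} \<and> fst \<sigma> v m \<noteq> 0")
      case True
      then have vs: "v \<in> sendset \<sigma> m" using in_sendset[OF s] by auto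
      have "snd \<sigma> m m' \<le> v" using isR_ge[OF R vs] sendset_Inf[OF vs] by linarith
      with elim have "\<not> v \<le> snd \<sigma> m m'" by auto
      then show ?thesis by simp
    next
      case False then show ?thesis by (auto simp: fi_out)
    qed
  qed
qed

lemma KR_isL: "\<sigma> \<in> Sigma_set \<Longrightarrow> is_L \<sigma> m m' \<Longrightarrow> KR \<sigma> m m' = 0"
  using KL_KR[of \<sigma> m m'] KL_isL[of \<sigma> m m'] by simp
lemma KR_isR: "\<sigma> \<in> Sigma_set \<Longrightarrow> is_R \<sigma> m m' \<Longrightarrow> KR \<sigma> m m' = P \<sigma> m"
  using KL_KR[of \<sigma> m m'] KL_isR[of \<sigma> m m'] by simp
lemma K_zero: "\<sigma> \<in> Sigma_set \<Longrightarrow> \<not> P \<sigma> m > 0 \<Longrightarrow> KL \<sigma> m m' = 0 \<and> KR \<sigma> m m' = 0"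
  using KL_KR[of \<sigma> m m'] KL_nonneg[of \<sigma> m m'] KR_nonneg[of \<sigma> m m'] P_nonneg[of \<sigma> m] by simp

lemma coordD: "coordinated f \<sigma> \<Longrightarrow> P \<sigma> m > 0 \<Longrightarrow> P \<sigma> m' > 0 \<Longrightarrow>
   cc \<sigma> m m' \<or> (is_R \<sigma> m m' \<and> is_R \<sigma> m' m)"
  unfolding coordinated_def mu_bar_P cc_def by blast

definition good :: "'m::finite strat \<Rightarrow> real \<Rightarrow> bool" where
  "good \<sigma> u \<longleftrightarrow> u \<in> {0..1} \<and> (\<forall>m. \<not> P \<sigma> m > 0 \<longrightarrow> fst \<sigma> u m = 0) \<and> (\<forall>m. u \<noteq> Inf (sendset \<sigma> m))"

lemma T_eq:
  assumes s: "\<sigma> \<in> Sigma_set" and co: "coordinated f \<sigma>" and g: "good \<sigma> u"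
  shows "fst \<sigma> u m * ((1-u) * (if u \<le> snd \<sigma> m m' then 1 else 0) * KL \<sigma> m' m
      + u * (if u > snd \<sigma> m m' then 1 else 0) * KR \<sigma> m' m)
     = fst \<sigma> u m * (P \<sigma> m' * (if cc \<sigma> m m' then 1 - u else u))"
proof (cases "fst \<sigma> u m = 0")
  case False
  have u01: "u \<in> {0..1}" using g unfolding good_def by auto
  have Pm: "P \<sigma> m > 0" using g False unfolding good_def by auto
  have us: "u \<in> sendset \<sigma> m" using in_sendset[OF s u01 False] .
  have uInf: "u \<noteq> Inf (sendset \<sigma> m)" using g unfolding good_def by auto
  show ?thesis
  proof (cases "P \<sigma> m' > 0")
    case False
    then show ?thesis using K_zero[OF s False, of m] P_nonneg[OF s, of m'] by simp
  next
    case True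
    show ?thesis
    proof (cases "cc \<sigma> m m'")
      case c: True
      then have "is_L \<sigma> m m'" "is_L \<sigma> m' m" unfolding cc_def by auto
      then show ?thesis using KL_isL[OF s] KR_isL[OF s] isL_le[OF _ us] c by simp
    next
      case c: False
      then have R: "is_R \<sigma> m m'" "is_R \<sigma> m' m" using coordD[OF co Pm True] by auto
      have "snd \<sigma> m m' < u" using isR_ge[OF R(1) us] sendset_Inf[OF us] uInf by linarith
      then show ?thesis using KL_isR[OF s R(2)] KR_isR[OF s R(2)] c by simp
    qed
  qed
qed simp

lemma V_eq:
  assumes s: "(\<sigma>::'m::finite strat) \<in> Sigma_set" and co: "coordinated f \<sigma>" and g: "good \<sigma> u"
  shows "pi_u f \<sigma> \<sigma> u = u + (1 - 2*u) * (\<Sum>m\<in>UNIV. fst \<sigma> u m * aa \<sigma> m)"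
proof -
  have u01: "u \<in> {0..1}" using g unfolding good_def by auto
  have inner: "(\<Sum>m'\<in>UNIV. P \<sigma> m' * (if cc \<sigma> m m' then 1 - u else u)) = u + (1 - 2*u) * aa \<sigma> m" for m
  proof -
    have "(\<Sum>m'\<in>UNIV. P \<sigma> m' * (if cc \<sigma> m m' then 1 - u else u))
        = (\<Sum>m'\<in>UNIV. u * P \<sigma> m' + (1 - 2*u) * (P \<sigma> m' * (if cc \<sigma> m m' then 1 else 0)))"
      by (intro sum.cong refl) (auto simp: algebra_simps)
    also have "\<dots> = u * (\<Sum>m'\<in>UNIV. P \<sigma> m') + (1 - 2*u) * aa \<sigma> m"
      unfolding aa_def by (simp add: sum.distrib sum_distrib_left)
    finally show ?thesis using sum_P[OF s] by simp
  qed
  have "pi_u f \<sigma> \<sigma> u = (\<Sum>m\<in>UNIV. \<Sum>m'\<in>UNIV. fst \<sigma> u m * (P \<sigma> m' * (if cc \<sigma> m m' then 1 - u else u)))"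
    unfolding EL[OF s] by (intro sum.cong refl) (rule T_eq[OF s co g])
  also have "\<dots> = (\<Sum>m\<in>UNIV. fst \<sigma> u m * (u + (1 - 2*u) * aa \<sigma> m))"
    by (simp add: inner flip: sum_distrib_left)
  also have "\<dots> = (\<Sum>m\<in>UNIV. u * fst \<sigma> u m + (1 - 2*u) * (fst \<sigma> u m * aa \<sigma> m))"
    by (intro sum.cong refl) (simp add: algebra_simps)
  also have "\<dots> = u * (\<Sum>m\<in>UNIV. fst \<sigma> u m) + (1 - 2*u) * (\<Sum>m\<in>UNIV. fst \<sigma> u m * aa \<sigma> m)"
    by (simp add: sum.distrib sum_distrib_left)
  finally show ?thesis using strat_sum[OF s u01] by simp
qed

lemma AE_good:
  assumes s: "(\<sigma>::'m::finite strat) \<in> Sigma_set"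
  shows "AE u in lborel. u \<in> {0..1} \<longrightarrow> good \<sigma> u"
proof -
  have A: "AE u in lborel. u \<in> {0..1} \<longrightarrow> (\<not> P \<sigma> m > 0 \<longrightarrow> fst \<sigma> u m = 0)" for m
  proof (cases "P \<sigma> m > 0")
    case False
    then have "P \<sigma> m = 0" using P_nonneg[OF s, of m] by simp
    then have "AE u in lborel. fst \<sigma> u m * fi u = 0"
      unfolding P_def using integral_nonneg_eq_0_iff_AE[OF intP[OF s]] nonneg_prod[OF s, of 1] by simp
    then show ?thesis
    proof eventually_elim
      case (elim u)
      show ?case
      proof (intro impI)
        assume u: "u \<in> {0..1}" "\<not> P \<sigma> m > 0"
        then have "f u > 0" using f_pos by auto
        then show "fst \<sigma> u m = 0" using elim fi_in[OF u(1)] by auto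
      qed
    qed
  qed simp
  have B: "AE u in lborel. \<forall>m\<in>UNIV. u \<in> {0..1} \<longrightarrow> (\<not> P \<sigma> m > 0 \<longrightarrow> fst \<sigma> u m = 0)"
    by (rule AE_finite_allI) (simp, rule A)
  have C: "AE u in lborel. \<forall>m\<in>UNIV. u \<noteq> Inf (sendset \<sigma> m)"
    by (rule AE_finite_allI) (auto intro: AE_lborel_singleton)
  from B C show ?thesis
    by eventually_elim (auto simp: good_def)
qed

lemma sum_delta_mult: "(\<Sum>m\<in>UNIV. (if m = k then 1 else 0) * Y m) = (Y (k::'m::finite) :: real)"
proof -
  have "(\<Sum>m\<in>UNIV. (if m = k then 1 else 0) * Y m) = (\<Sum>m\<in>UNIV. if m = k then Y m else 0)"
    by (rule sum.cong) auto
  then show ?thesis by (simp add: sum.delta)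
qed

definition dev :: "'m strat \<Rightarrow> 'm \<Rightarrow> 'm strat" where
  "dev \<sigma> k = (\<lambda>u m. if m = k then 1 else 0, \<lambda>m m'. if cc \<sigma> k m' then 1 else 0)"

lemma dev_Sigma: "dev \<sigma> (k::'m::finite) \<in> Sigma_set"
  unfolding dev_def Sigma_set_def by auto

lemma DL:
  assumes s: "(\<sigma>::'m::finite strat) \<in> Sigma_set" and co: "coordinated f \<sigma>" and k: "P \<sigma> k > 0"
    and u: "0 < u" "u \<le> 1"
  shows "pi_u f (dev \<sigma> k) \<sigma> u = u + (1 - 2*u) * aa \<sigma> k"
proof -
  have T: "(1-u) * (if u \<le> (if cc \<sigma> k m' then 1 else 0) then 1 else 0) * KL \<sigma> m' k
      + u * (if u > (if cc \<sigma> k m' then 1 else 0) then 1 else 0) * KR \<sigma> m' k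
     = P \<sigma> m' * (if cc \<sigma> k m' then 1 - u else u)" for m'
  proof (cases "P \<sigma> m' > 0")
    case False
    then show ?thesis using K_zero[OF s False, of k] P_nonneg[OF s, of m'] by simp
  next
    case True
    show ?thesis
    proof (cases "cc \<sigma> k m'")
      case c: True
      then have "is_L \<sigma> m' k" unfolding cc_def by auto
      then show ?thesis using KL_isL[OF s] KR_isL[OF s] c u by simp
    next
      case c: False
      then have "\<not> cc \<sigma> m' k" using cc_sym by metis
      then have R: "is_R \<sigma> m' k" using coordD[OF co True k] by auto
      then show ?thesis using KL_isR[OF s R] KR_isR[OF s R] c u by simp
    qed
  qed
  have "pi_u f (dev \<sigma> k) \<sigma> u = (\<Sum>m'\<in>UNIV. P \<sigma> m' * (if cc \<sigma> k m' then 1 - u else u))"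
  proof -
    have d: "(\<Sum>m\<in>UNIV. (if m = k then 1 else 0) * Y m) = Y k" for Y :: "'m \<Rightarrow> real"
    proof -
      have "(\<Sum>m\<in>UNIV. (if m = k then 1 else 0) * Y m) = (\<Sum>m\<in>UNIV. if m = k then Y m else 0)"
        by (rule sum.cong) auto
      then show ?thesis by (simp add: sum.delta)
    qed
    show ?thesis unfolding EL[OF s] dev_def fst_conv snd_conv sum_distrib_left[symmetric] d T ..
  qed
  also have "\<dots> = (\<Sum>m'\<in>UNIV. u * P \<sigma> m' + (1 - 2*u) * (P \<sigma> m' * (if cc \<sigma> k m' then 1 else 0)))"
    by (intro sum.cong refl) (auto simp: algebra_simps)
  also have "\<dots> = u * (\<Sum>m'\<in>UNIV. P \<sigma> m') + (1 - 2*u) * aa \<sigma> k"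
    unfolding aa_def by (simp add: sum.distrib sum_distrib_left)
  finally show ?thesis using sum_P[OF s] by simp
qed

lemma pi_u_meas[measurable]:
  assumes s: "(\<sigma>::'m::finite strat) \<in> Sigma_set" and s': "\<sigma>' \<in> Sigma_set"
  shows "(\<lambda>u. pi_u f \<sigma>' \<sigma> u) \<in> borel_measurable lborel"
  unfolding EL[OF s] using s' by measurable

lemma pi_tot_fi: "pi_tot f \<sigma> \<sigma>' = integral\<^sup>L lborel (\<lambda>u. pi_u f \<sigma> \<sigma>' u * fi u)"
  unfolding pi_tot_def set_int_fi ..

definition Wf :: "real \<Rightarrow> real \<Rightarrow> real" where
  "Wf A B = integral\<^sup>L lborel (\<lambda>u. (u + (1 - 2*u) * (if u \<le> 1/2 then A else B)) * fi u)"

definition c0 where "c0 = integral\<^sup>L lborel (\<lambda>u. u * fi u)"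
definition alpha where "alpha = integral\<^sup>L lborel (\<lambda>u. ((1 - 2*u) * (if u \<le> 1/2 then 1 else 0)) * fi u)"
definition beta where "beta = integral\<^sup>L lborel (\<lambda>u. ((1 - 2*u) * (if u \<le> 1/2 then 0 else 1)) * fi u)"

lemma int1: "integrable lborel (\<lambda>u. u * fi u)"
  by (rule int_bdd[where C=1]) auto
lemma int2: "integrable lborel (\<lambda>u. ((1 - 2*u) * (if u \<le> 1/2 then 1 else 0)) * fi u)"
  by (rule int_bdd[where C=1]) auto
lemma int3: "integrable lborel (\<lambda>u. ((1 - 2*u) * (if u \<le> 1/2 then 0 else 1)) * fi u)"
  by (rule int_bdd[where C=1]) auto

lemma Wf_lin: "Wf A B = c0 + A * alpha + B * beta"
proof -
  have "Wf A B = integral\<^sup>L lborel (\<lambda>u. u * fi u + A * (((1 - 2*u) * (if u \<le> 1/2 then 1 else 0)) * fi u)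
     + B * (((1 - 2*u) * (if u \<le> 1/2 then 0 else 1)) * fi u))"
    unfolding Wf_def by (rule Bochner_Integration.integral_cong) (auto simp: algebra_simps)
  also have "\<dots> = c0 + A * alpha + B * beta"
    unfolding c0_def alpha_def beta_def
    using int1 int2 int3 by simp
  finally show ?thesis .
qed

lemma alpha_nonneg: "alpha \<ge> 0"
  unfolding alpha_def by (rule Bochner_Integration.integral_nonneg) (auto intro!: mult_nonneg_nonneg fi_nonneg)
lemma beta_nonpos: "beta \<le> 0"
proof -
  have "0 \<le> integral\<^sup>L lborel (\<lambda>u. - (((1 - 2*u) * (if u \<le> 1/2 then 0 else 1)) * fi u))"
    by (rule Bochner_Integration.integral_nonneg) (auto intro!: mult_nonpos_nonneg fi_nonneg)
  then show ?thesis unfolding beta_def by simp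
qed

definition q where "q = integral\<^sup>L lborel (\<lambda>u. (if u \<le> 1/2 then 1 else 0) * fi u)"
definition Plow :: "'m::finite strat \<Rightarrow> 'm \<Rightarrow> real" where
  "Plow \<sigma> m = integral\<^sup>L lborel (\<lambda>v. fst \<sigma> v m * (if v \<le> 1/2 then 1 else 0) * fi v)"
definition Phigh :: "'m::finite strat \<Rightarrow> 'm \<Rightarrow> real" where
  "Phigh \<sigma> m = integral\<^sup>L lborel (\<lambda>v. fst \<sigma> v m * (if v > 1/2 then 1 else 0) * fi v)"

lemma Plow_nonneg: "\<sigma> \<in> Sigma_set \<Longrightarrow> Plow \<sigma> m \<ge> 0"
  unfolding Plow_def by (rule Bochner_Integration.integral_nonneg, rule nonneg_prod) auto
lemma Phigh_nonneg: "\<sigma> \<in> Sigma_set \<Longrightarrow> Phigh \<sigma> m \<ge> 0"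
  unfolding Phigh_def by (rule Bochner_Integration.integral_nonneg, rule nonneg_prod) auto
lemma Plow_Phigh: "\<sigma> \<in> Sigma_set \<Longrightarrow> Plow \<sigma> m + Phigh \<sigma> m = P \<sigma> m"
proof -
  assume s: "\<sigma> \<in> Sigma_set"
  have "Plow \<sigma> m + Phigh \<sigma> m = integral\<^sup>L lborel (\<lambda>v. fst \<sigma> v m * (if v \<le> 1/2 then 1 else 0) * fi v
     + fst \<sigma> v m * (if v > 1/2 then 1 else 0) * fi v)"
    unfolding Plow_def Phigh_def by (rule Bochner_Integration.integral_add[symmetric], rule intKL[OF s], rule intKR[OF s])
  also have "\<dots> = P \<sigma> m" unfolding P_def
    by (rule Bochner_Integration.integral_cong) auto
  finally show ?thesis .
qed

lemma sum_Plow: "(\<sigma>::'m::finite strat) \<in> Sigma_set \<Longrightarrow> (\<Sum>m\<in>UNIV. Plow \<sigma> m) = q"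
proof -
  assume a: "\<sigma> \<in> Sigma_set"
  have "(\<Sum>m\<in>UNIV. Plow \<sigma> m) = integral\<^sup>L lborel (\<lambda>u. \<Sum>m\<in>UNIV. fst \<sigma> u m * (if u \<le> 1/2 then 1 else 0) * fi u)"
    unfolding Plow_def by (subst Bochner_Integration.integral_sum) (rule intKL[OF a] | rule refl)+
  also have "\<dots> = q" unfolding q_def
  proof (rule Bochner_Integration.integral_cong[OF refl])
    fix u show "(\<Sum>m\<in>UNIV. fst \<sigma> u m * (if u \<le> 1/2 then 1 else 0) * fi u) = (if u \<le> 1/2 then 1 else 0) * fi u"
      by (cases "u \<in> {0..1}") (auto simp: fi_out strat_sum[OF a] simp flip: sum_distrib_right)
  qed
  finally show ?thesis .
qed

lemma sum_Phigh: "(\<sigma>::'m::finite strat) \<in> Sigma_set \<Longrightarrow> (\<Sum>m\<in>UNIV. Phigh \<sigma> m) = 1 - q"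
proof -
  assume a: "\<sigma> \<in> Sigma_set"
  have "(\<Sum>m\<in>UNIV. Plow \<sigma> m) + (\<Sum>m\<in>UNIV. Phigh \<sigma> m) = 1"
    using sum_P[OF a] Plow_Phigh[OF a] by (simp flip: sum.distrib)
  then show ?thesis using sum_Plow[OF a] by simp
qed

lemma weighted_low:
  assumes a: "(\<sigma>::'m::finite strat) \<in> Sigma_set"
  shows "(\<Sum>m\<in>UNIV. Plow \<sigma> m * c m) = integral\<^sup>L lborel (\<lambda>u. (\<Sum>m\<in>UNIV. fst \<sigma> u m * c m) * ((if u \<le> 1/2 then 1 else 0) * fi u))"
proof -
  have "(\<Sum>m\<in>UNIV. Plow \<sigma> m * c m) = (\<Sum>m\<in>UNIV. integral\<^sup>L lborel (\<lambda>u. c m * (fst \<sigma> u m * (if u \<le> 1/2 then 1 else 0) * fi u)))"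
    unfolding Plow_def by (simp add: mult.commute)
  also have "\<dots> = integral\<^sup>L lborel (\<lambda>u. \<Sum>m\<in>UNIV. c m * (fst \<sigma> u m * (if u \<le> 1/2 then 1 else 0) * fi u))"
    by (rule Bochner_Integration.integral_sum[symmetric]) (rule integrable_mult_right, rule intKL[OF a])
  also have "\<dots> = integral\<^sup>L lborel (\<lambda>u. (\<Sum>m\<in>UNIV. fst \<sigma> u m * c m) * ((if u \<le> 1/2 then 1 else 0) * fi u))"
    by (rule Bochner_Integration.integral_cong) (auto simp: sum_distrib_left sum_distrib_right algebra_simps)
  finally show ?thesis .
qed

lemma weighted_high:
  assumes a: "(\<sigma>::'m::finite strat) \<in> Sigma_set"
  shows "(\<Sum>m\<in>UNIV. Phigh \<sigma> m * c m) = integral\<^sup>L lborel (\<lambda>u. (\<Sum>m\<in>UNIV. fst \<sigma> u m * c m) * ((if u > 1/2 then 1 else 0) * fi u))"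
proof -
  have "(\<Sum>m\<in>UNIV. Phigh \<sigma> m * c m) = (\<Sum>m\<in>UNIV. integral\<^sup>L lborel (\<lambda>u. c m * (fst \<sigma> u m * (if u > 1/2 then 1 else 0) * fi u)))"
    unfolding Phigh_def by (simp add: mult.commute)
  also have "\<dots> = integral\<^sup>L lborel (\<lambda>u. \<Sum>m\<in>UNIV. c m * (fst \<sigma> u m * (if u > 1/2 then 1 else 0) * fi u))"
    by (rule Bochner_Integration.integral_sum[symmetric]) (rule integrable_mult_right, rule intKR[OF a])
  also have "\<dots> = integral\<^sup>L lborel (\<lambda>u. (\<Sum>m\<in>UNIV. fst \<sigma> u m * c m) * ((if u > 1/2 then 1 else 0) * fi u))"
    by (rule Bochner_Integration.integral_cong) (auto simp: sum_distrib_left sum_distrib_right algebra_simps)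
  finally show ?thesis .
qed

lemma q_high: "integral\<^sup>L lborel (\<lambda>u. (if u > 1/2 then 1 else 0) * fi u) = 1 - q"
proof -
  have "q + integral\<^sup>L lborel (\<lambda>u. (if u > 1/2 then 1 else 0) * fi u) = integral\<^sup>L lborel (\<lambda>u. (if u \<le> 1/2 then 1 else 0) * fi u + (if u > 1/2 then 1 else 0) * fi u)"
    unfolding q_def by (rule Bochner_Integration.integral_add[symmetric]) (auto intro!: int_bdd[where C=1])
  also have "\<dots> = integral\<^sup>L lborel fi" by (rule Bochner_Integration.integral_cong) auto
  finally show ?thesis using fi_one by simp
qed

lemma q_bounds: "0 \<le> q" "q \<le> 1"
proof -
  show "0 \<le> q" unfolding q_def by (rule Bochner_Integration.integral_nonneg) (auto intro: fi_nonneg)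
  have "0 \<le> integral\<^sup>L lborel (\<lambda>u. (if u > 1/2 then 1 else 0) * fi u)"
    by (rule Bochner_Integration.integral_nonneg) (auto intro: fi_nonneg)
  then show "q \<le> 1" using q_high by simp
qed

lemma aa_bounds: "(\<sigma>::'m::finite strat) \<in> Sigma_set \<Longrightarrow> 0 \<le> aa \<sigma> m \<and> aa \<sigma> m \<le> 1"
proof -
  assume s: "\<sigma> \<in> Sigma_set"
  have "aa \<sigma> m \<le> (\<Sum>m'\<in>UNIV. P \<sigma> m')"
    unfolding aa_def by (rule sum_mono) (use P_nonneg[OF s] in auto)
  moreover have "0 \<le> aa \<sigma> m"
    unfolding aa_def by (rule sum_nonneg) (use P_nonneg[OF s] in auto)
  ultimately show ?thesis using sum_P[OF s] by simp
qed

lemma eq_bound: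
  fixes \<sigma> :: "'m::finite strat"
  assumes s: "\<sigma> \<in> Sigma_set" and co: "coordinated f \<sigma>"
    and eqm: "\<forall>u\<in>{0..1}. \<forall>\<sigma>'\<in>Sigma_set. pi_u f \<sigma>' \<sigma> u \<le> pi_u f \<sigma> \<sigma> u"
  shows "\<exists>A B. pi_tot f \<sigma> \<sigma> = Wf A B \<and> q*A \<le> q*q + (1-q)*B \<and> A \<le> 1 \<and> 0 \<le> B"
proof -
  define S where "S = {m. P \<sigma> m > 0}"
  have finS: "finite S" by simp
  have Sne: "S \<noteq> {}"
  proof
    assume "S = {}"
    then have "\<And>m. P \<sigma> m = 0" using P_nonneg[OF s] unfolding S_def by (metis empty_iff mem_Collect_eq order_less_le)
    then show False using sum_P[OF s] by simp
  qed
  define Amax where "Amax = Max (aa \<sigma> ` S)"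
  define Amin where "Amin = Min (aa \<sigma> ` S)"
  have Amax_ge: "\<And>k. k \<in> S \<Longrightarrow> aa \<sigma> k \<le> Amax" unfolding Amax_def using finS by auto
  have Amin_le: "\<And>k. k \<in> S \<Longrightarrow> Amin \<le> aa \<sigma> k" unfolding Amin_def using finS by auto
  obtain kx where kx: "kx \<in> S" "aa \<sigma> kx = Amax"
    using Max_in[of "aa \<sigma> ` S"] finS Sne unfolding Amax_def by (metis finite_imageI image_iff image_is_empty)
  obtain kn where kn: "kn \<in> S" "aa \<sigma> kn = Amin"
    using Min_in[of "aa \<sigma> ` S"] finS Sne unfolding Amin_def by (metis finite_imageI image_iff image_is_empty)
  have Amax1: "Amax \<le> 1" using kx aa_bounds[OF s] by metis
  have Amin0: "0 \<le> Amin" using kn aa_bounds[OF s] by metis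
  define abar where "abar u = (\<Sum>m\<in>UNIV. fst \<sigma> u m * aa \<sigma> m)" for u
  define h where "h u = (if u \<le> (1/2::real) then Amax else Amin)" for u
  have abar_meas[measurable]: "abar \<in> borel_measurable lborel" unfolding abar_def using s by measurable
  have h_meas[measurable]: "h \<in> borel_measurable lborel" unfolding h_def by measurable
  have H: "AE u in lborel. u \<in> {0..1} \<longrightarrow> abar u = h u \<and> pi_u f \<sigma> \<sigma> u = u + (1 - 2*u) * h u"
    using AE_good[OF s] AE_lborel_singleton[of 0] AE_lborel_singleton[of "1/2"]
  proof eventually_elim
    case (elim u)
    show ?case
    proof
      assume u01: "u \<in> {0..1}"
      have g: "good \<sigma> u" using elim u01 by auto
      have V: "pi_u f \<sigma> \<sigma> u = u + (1 - 2*u) * abar u" using V_eq[OF s co g] unfolding abar_def .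
      have dv: "(1 - 2*u) * aa \<sigma> k \<le> (1 - 2*u) * abar u" if k: "k \<in> S" for k
      proof -
        have "pi_u f (dev \<sigma> k) \<sigma> u = u + (1 - 2*u) * aa \<sigma> k"
          using DL[OF s co] k elim u01 unfolding S_def by auto
        moreover have "pi_u f (dev \<sigma> k) \<sigma> u \<le> pi_u f \<sigma> \<sigma> u" using eqm u01 dev_Sigma by blast
        ultimately show ?thesis using V by simp
      qed
      have z: "fst \<sigma> u m = 0" if "m \<notin> S" for m using g that unfolding good_def S_def by auto
      have up: "abar u \<le> Amax"
      proof -
        have "abar u \<le> (\<Sum>m\<in>UNIV. fst \<sigma> u m * Amax)"
          unfolding abar_def
        proof (rule sum_mono)
          fix m show "fst \<sigma> u m * aa \<sigma> m \<le> fst \<sigma> u m * Amax"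
            by (cases "m \<in> S") (auto simp: z intro!: mult_left_mono Amax_ge strat_nonneg[OF s u01])
        qed
        then show ?thesis using strat_sum[OF s u01] by (simp flip: sum_distrib_right)
      qed
      have lo: "Amin \<le> abar u"
      proof -
        have "(\<Sum>m\<in>UNIV. fst \<sigma> u m * Amin) \<le> abar u"
          unfolding abar_def
        proof (rule sum_mono)
          fix m show "fst \<sigma> u m * Amin \<le> fst \<sigma> u m * aa \<sigma> m"
            by (cases "m \<in> S") (auto simp: z intro!: mult_left_mono Amin_le strat_nonneg[OF s u01])
        qed
        then show ?thesis using strat_sum[OF s u01] by (simp flip: sum_distrib_right)
      qed
      have "abar u = h u"
      proof (cases "u < 1/2")
        case True
        have "(1 - 2*u) * Amax \<le> (1 - 2*u) * abar u" using dv[OF kx(1)] kx(2) by simp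
        then have "Amax \<le> abar u" using True by simp
        then show ?thesis using up True unfolding h_def by simp
      next
        case False
        then have u2: "u > 1/2" using elim by auto
        have "(1 - 2*u) * Amin \<le> (1 - 2*u) * abar u" using dv[OF kn(1)] kn(2) by simp
        then have "abar u \<le> Amin" using u2 by (simp add: mult_le_cancel_left)
        then show ?thesis using lo u2 unfolding h_def by simp
      qed
      then show "abar u = h u \<and> pi_u f \<sigma> \<sigma> u = u + (1 - 2*u) * h u" using V by simp
    qed
  qed
  have W: "pi_tot f \<sigma> \<sigma> = Wf Amax Amin"
    unfolding pi_tot_fi Wf_def
  proof (rule integral_cong_AE)
    show "(\<lambda>u. pi_u f \<sigma> \<sigma> u * fi u) \<in> borel_measurable lborel" using s by measurable
    show "(\<lambda>u. (u + (1 - 2 * u) * (if u \<le> 1 / 2 then Amax else Amin)) * fi u) \<in> borel_measurable lborel"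
      by measurable
    show "AE u in lborel. pi_u f \<sigma> \<sigma> u * fi u = (u + (1 - 2 * u) * (if u \<le> 1 / 2 then Amax else Amin)) * fi u"
      using H by eventually_elim (auto simp: fi_out h_def)
  qed
  have low: "(\<Sum>m\<in>UNIV. Plow \<sigma> m * aa \<sigma> m) = Amax * q"
  proof -
    have "(\<Sum>m\<in>UNIV. Plow \<sigma> m * aa \<sigma> m) = integral\<^sup>L lborel (\<lambda>u. abar u * ((if u \<le> 1/2 then 1 else 0) * fi u))"
      unfolding weighted_low[OF s] abar_def ..
    also have "\<dots> = integral\<^sup>L lborel (\<lambda>u. Amax * ((if u \<le> 1/2 then 1 else 0) * fi u))"
    proof (rule integral_cong_AE)
      show "AE u in lborel. abar u * ((if u \<le> 1/2 then 1 else 0) * fi u) = Amax * ((if u \<le> 1/2 then 1 else 0) * fi u)"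
        using H
      proof eventually_elim
        case (elim u)
        show ?case
        proof (cases "u \<in> {0..1}")
          case True
          then have "abar u = h u" using elim by blast
          then show ?thesis unfolding h_def by simp
        next
          case False then show ?thesis by (simp add: fi_out)
        qed
      qed
    qed (measurable, measurable)
    finally show ?thesis unfolding q_def by simp
  qed
  have high: "(\<Sum>m\<in>UNIV. Phigh \<sigma> m * aa \<sigma> m) = Amin * (1 - q)"
  proof -
    have "(\<Sum>m\<in>UNIV. Phigh \<sigma> m * aa \<sigma> m) = integral\<^sup>L lborel (\<lambda>u. abar u * ((if u > 1/2 then 1 else 0) * fi u))"
      unfolding weighted_high[OF s] abar_def ..
    also have "\<dots> = integral\<^sup>L lborel (\<lambda>u. Amin * ((if u > 1/2 then 1 else 0) * fi u))"
    proof (rule integral_cong_AE)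
      show "AE u in lborel. abar u * ((if u > 1/2 then 1 else 0) * fi u) = Amin * ((if u > 1/2 then 1 else 0) * fi u)"
        using H
      proof eventually_elim
        case (elim u)
        show ?case
        proof (cases "u \<in> {0..1}")
          case True
          then have "abar u = h u" using elim by blast
          then show ?thesis unfolding h_def by simp
        next
          case False then show ?thesis by (simp add: fi_out)
        qed
      qed
    qed (measurable, measurable)
    finally show ?thesis using q_high by simp
  qed
  define Lc where "Lc m m' = (if cc \<sigma> m m' then 1 else (0::real))" for m m'
  have Lc01: "0 \<le> Lc m m'" "Lc m m' \<le> 1" for m m' unfolding Lc_def by auto
  have Lc_sym: "Lc m m' = Lc m' m" for m m' unfolding Lc_def using cc_sym by metis
  have aa_split: "aa \<sigma> m = (\<Sum>m'\<in>UNIV. Plow \<sigma> m' * Lc m m') + (\<Sum>m'\<in>UNIV. Phigh \<sigma> m' * Lc m m')" for m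
    unfolding aa_def Lc_def by (simp add: Plow_Phigh[OF s, symmetric] algebra_simps sum.distrib)
  define X where "X = (\<Sum>m\<in>UNIV. \<Sum>m'\<in>UNIV. Plow \<sigma> m * Phigh \<sigma> m' * Lc m m')"
  have e1: "Amax * q = (\<Sum>m\<in>UNIV. \<Sum>m'\<in>UNIV. Plow \<sigma> m * Plow \<sigma> m' * Lc m m') + X"
    unfolding low[symmetric] X_def aa_split
    by (simp add: sum_distrib_left sum.distrib algebra_simps)
  have e2: "Amin * (1 - q) = (\<Sum>m\<in>UNIV. \<Sum>m'\<in>UNIV. Phigh \<sigma> m * Plow \<sigma> m' * Lc m m') + (\<Sum>m\<in>UNIV. \<Sum>m'\<in>UNIV. Phigh \<sigma> m * Phigh \<sigma> m' * Lc m m')"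
    unfolding high[symmetric] aa_split
    by (simp add: sum_distrib_left sum.distrib algebra_simps)
  have e3: "(\<Sum>m\<in>UNIV. \<Sum>m'\<in>UNIV. Phigh \<sigma> m * Plow \<sigma> m' * Lc m m') = X"
    unfolding X_def by (subst sum.swap) (simp add: Lc_sym mult.commute)
  have e4: "(\<Sum>m\<in>UNIV. \<Sum>m'\<in>UNIV. Phigh \<sigma> m * Phigh \<sigma> m' * Lc m m') \<ge> 0"
    by (intro sum_nonneg mult_nonneg_nonneg Phigh_nonneg[OF s] Lc01)
  have e5: "(\<Sum>m\<in>UNIV. \<Sum>m'\<in>UNIV. Plow \<sigma> m * Plow \<sigma> m' * Lc m m') \<le> (\<Sum>m\<in>UNIV. \<Sum>m'\<in>UNIV. Plow \<sigma> m * Plow \<sigma> m')"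
    by (intro sum_mono) (simp add: mult_left_le Lc01 Plow_nonneg[OF s] mult_nonneg_nonneg)
  have e6: "(\<Sum>m\<in>UNIV. \<Sum>m'\<in>UNIV. Plow \<sigma> m * Plow \<sigma> m') = q * q"
    using sum_Plow[OF s] sum_product[of "Plow \<sigma>" UNIV "Plow \<sigma>" UNIV] by simp
  have "q * Amax \<le> q * q + (1 - q) * Amin" using e1 e2 e3 e4 e5 e6 by (simp add: algebra_simps)
  then show ?thesis using W Amax1 Amin0 by blast
qed

lemma final_arith:
  fixes A B c a b q :: real
  assumes "a \<ge> 0" "b \<le> 0" "0 \<le> q" "q \<le> 1" "q*A \<le> q*q + (1-q)*B" "A \<le> 1" "0 \<le> B"
  shows "c + A*a + B*b \<le> max (c + 1*a + q*b) (c + q*a + 0*b)"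
proof (cases "A \<le> q")
  case True
  then have "A*a \<le> q*a" using assms by (simp add: mult_right_mono)
  moreover have "B*b \<le> 0" using assms by (simp add: mult_nonneg_nonpos)
  ultimately show ?thesis by simp
next
  case False
  then have q1: "q < 1" using assms by simp
  define t where "t = (A - q) / (1 - q)"
  have t01: "0 \<le> t" "t \<le> 1" unfolding t_def using False q1 assms by (auto simp: field_simps)
  have At: "A = q + t * (1 - q)" unfolding t_def using q1 by (simp add: field_simps)
  have "q * (A - q) \<le> (1 - q) * B" using assms by (simp add: algebra_simps)
  then have "q * t \<le> B" unfolding t_def using q1 by (simp add: field_simps mult.commute)
  then have Bb: "B * b \<le> q * t * b" using assms by (simp add: mult_right_mono_neg)
  have "A*a = (q + t*(1-q))*a" using At by simp
  then have Aa: "A*a = q*a + t*a - q*t*a" by (simp add: algebra_simps)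
  have "A*a + B*b \<le> (1 - t) * (q*a) + t * (a + q*b)"
    using Bb Aa by (simp add: algebra_simps)
  also have "\<dots> \<le> (1 - t) * max (a + q*b) (q*a) + t * max (a + q*b) (q*a)"
    by (intro add_mono mult_left_mono) (use t01 in auto)
  also have "\<dots> = max (a + q*b) (q*a)" by (simp add: algebra_simps)
  finally show ?thesis by (simp add: max_add_distrib_left[symmetric] add.assoc)
qed

lemma isL_iff: "is_L \<sigma> m m' \<longleftrightarrow> Sup (sendset \<sigma> m) \<le> snd \<sigma> m m'"
  unfolding is_L_def sendset_def ..
lemma isR_iff: "is_R \<sigma> m m' \<longleftrightarrow> snd \<sigma> m m' \<le> Inf (sendset \<sigma> m)"
  unfolding is_R_def sendset_def ..

lemma star_sum: "(\<Sum>m\<in>UNIV. mu_star mL mR u (m::'m::finite)) = 1"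
proof (cases "u \<le> 1/2")
  case True
  then have "(\<Sum>m\<in>UNIV. mu_star mL mR u m) = (\<Sum>m\<in>UNIV. if m = mL then 1 else 0)"
    unfolding mu_star_def by (intro sum.cong) auto
  then show ?thesis by simp
next
  case False
  then have "(\<Sum>m\<in>UNIV. mu_star mL mR u m) = (\<Sum>m\<in>UNIV. if m = mR then 1 else 0)"
    unfolding mu_star_def by (intro sum.cong) auto
  then show ?thesis by simp
qed

lemma star_Sigma: "(\<forall>m m'. \<xi> m m' \<in> {0..1}) \<Longrightarrow> (mu_star mL mR, \<xi>) \<in> (Sigma_set :: 'm::finite strat set)"
  unfolding Sigma_set_def using star_sum[of mL mR] by (auto simp: mu_star_def)

lemma star_sendL: "mL \<noteq> mR \<Longrightarrow> sendset (mu_star mL mR, \<xi>) mL = {0..1/2}"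
  unfolding sendset_def mu_star_def by auto
lemma star_sendR: "mL \<noteq> mR \<Longrightarrow> sendset (mu_star mL mR, \<xi>) mR = {1/2<..1}"
  unfolding sendset_def mu_star_def by auto

lemma star_SupL: assumes "mL \<noteq> mR" shows "Sup (sendset (mu_star mL mR, \<xi>) mL) = 1/2"
  using star_sendL[OF assms, of \<xi>] by simp

lemma star_InfL: assumes "mL \<noteq> mR" shows "Inf (sendset (mu_star mL mR, \<xi>) mL) = 0"
  using star_sendL[OF assms, of \<xi>] by simp

lemma star_SupR: assumes "mL \<noteq> mR" shows "Sup (sendset (mu_star mL mR, \<xi>) mR) = 1"
  using star_sendR[OF assms, of \<xi>] by simp

lemma star_InfR: assumes "mL \<noteq> mR" shows "Inf (sendset (mu_star mL mR, \<xi>) mR) = 1/2"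
  using star_sendR[OF assms, of \<xi>] by simp


lemma star_P_other: "m \<noteq> mL \<Longrightarrow> m \<noteq> mR \<Longrightarrow> P (mu_star mL mR, \<xi>) m = 0"
  unfolding P_def mu_star_def by simp
lemma star_P_L: "mL \<noteq> mR \<Longrightarrow> P (mu_star mL mR, \<xi>) mL = q"
  unfolding P_def mu_star_def q_def by (rule Bochner_Integration.integral_cong) auto

lemma star_tot:
  fixes mL mR :: "'m::finite"
  assumes d: "mL \<noteq> mR" and xi: "\<forall>m m'. \<xi> m m' \<in> {0..1}"
    and co: "coordinated f (mu_star mL mR, \<xi>)"
  shows "pi_tot f (mu_star mL mR, \<xi>) (mu_star mL mR, \<xi>) = Wf (aa (mu_star mL mR, \<xi>) mL) (aa (mu_star mL mR, \<xi>) mR)"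
proof -
  let ?s = "(mu_star mL mR, \<xi>)"
  have s: "?s \<in> Sigma_set" using star_Sigma[OF xi] .
  have ab: "(\<Sum>m\<in>UNIV. fst ?s u m * aa ?s m) = (if u \<le> 1/2 then aa ?s mL else aa ?s mR)" for u
  proof (cases "u \<le> 1/2")
    case True
    have "(\<Sum>m\<in>UNIV. fst ?s u m * aa ?s m) = (\<Sum>m\<in>UNIV. (if m = mL then 1 else 0) * aa ?s m)"
      using True by (intro sum.cong) (auto simp: mu_star_def)
    then show ?thesis using True sum_delta_mult by simp
  next
    case False
    have "(\<Sum>m\<in>UNIV. fst ?s u m * aa ?s m) = (\<Sum>m\<in>UNIV. (if m = mR then 1 else 0) * aa ?s m)"
      using False by (intro sum.cong) (auto simp: mu_star_def)
    then show ?thesis using False sum_delta_mult by simp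
  qed
  show ?thesis
    unfolding pi_tot_fi Wf_def
  proof (rule integral_cong_AE)
    show "(\<lambda>u. pi_u f ?s ?s u * fi u) \<in> borel_measurable lborel" using s by measurable
    show "(\<lambda>u. (u + (1 - 2 * u) * (if u \<le> 1 / 2 then aa ?s mL else aa ?s mR)) * fi u) \<in> borel_measurable lborel"
      by measurable
    show "AE u in lborel. pi_u f ?s ?s u * fi u = (u + (1 - 2 * u) * (if u \<le> 1 / 2 then aa ?s mL else aa ?s mR)) * fi u"
      using AE_good[OF s]
    proof eventually_elim
      case (elim u)
      show ?case
      proof (cases "u \<in> {0..1}")
        case True
        then have "good ?s u" using elim by blast
        then show ?thesis using V_eq[OF s co] ab by simp
      next
        case False then show ?thesis by (simp add: fi_out)
      qed
    qed
  qed
qed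

lemma star_P_cases: "P (mu_star mL mR, \<xi>) m > 0 \<Longrightarrow> m = mL \<or> m = mR"
  using star_P_other by fastforce

lemma coordL: assumes d: "(mL::'m::finite) \<noteq> mR" shows "coordinated f (sigma_L mL mR)"
  unfolding coordinated_def mu_bar_P sigma_L_def
proof (intro allI impI)
  fix m m' assume "0 < P (mu_star mL mR, xi_L mR) m" "0 < P (mu_star mL mR, xi_L mR) m'"
  then have "m = mL \<or> m = mR" "m' = mL \<or> m' = mR" using star_P_cases by blast+
  then show "is_L (mu_star mL mR, xi_L mR) m m' \<and> is_L (mu_star mL mR, xi_L mR) m' m \<or>
         is_R (mu_star mL mR, xi_L mR) m m' \<and> is_R (mu_star mL mR, xi_L mR) m' m"
    using d by (auto simp: isL_iff isR_iff star_SupL[OF d] star_SupR[OF d] star_InfL[OF d] star_InfR[OF d] xi_L_def)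
qed

lemma coordR: assumes d: "(mL::'m::finite) \<noteq> mR" shows "coordinated f (sigma_R mL mR)"
  unfolding coordinated_def mu_bar_P sigma_R_def
proof (intro allI impI)
  fix m m' assume "0 < P (mu_star mL mR, xi_R mL) m" "0 < P (mu_star mL mR, xi_R mL) m'"
  then have "m = mL \<or> m = mR" "m' = mL \<or> m' = mR" using star_P_cases by blast+
  then show "is_L (mu_star mL mR, xi_R mL) m m' \<and> is_L (mu_star mL mR, xi_R mL) m' m \<or>
         is_R (mu_star mL mR, xi_R mL) m m' \<and> is_R (mu_star mL mR, xi_R mL) m' m"
    using d by (auto simp: isL_iff isR_iff star_SupL[OF d] star_SupR[OF d] star_InfL[OF d] star_InfR[OF d] xi_R_def)
qed

lemma aa_L: assumes d: "(mL::'m::finite) \<noteq> mR"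
  shows "aa (sigma_L mL mR) mL = 1" "aa (sigma_L mL mR) mR = q"
proof -
  let ?s = "(mu_star mL mR, xi_L mR)"
  have s: "?s \<in> Sigma_set" by (rule star_Sigma) (auto simp: xi_L_def)
  have ccv: "cc ?s mL mL" "cc ?s mL mR" "cc ?s mR mL" "\<not> cc ?s mR mR"
    using d by (auto simp: cc_def isL_iff star_SupL[OF d] star_SupR[OF d] xi_L_def)
  have "aa ?s mL = (\<Sum>m'\<in>UNIV. P ?s m')"
    unfolding aa_def
  proof (rule sum.cong[OF refl])
    fix m' show "P ?s m' * (if cc ?s mL m' then 1 else 0) = P ?s m'"
      using ccv star_P_other[of m' mL mR] by (cases "m' = mL \<or> m' = mR") auto
  qed
  then show "aa (sigma_L mL mR) mL = 1" using sum_P[OF s] unfolding sigma_L_def by simp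
  have "aa ?s mR = (\<Sum>m'\<in>UNIV. (if m' = mL then 1 else 0) * P ?s m')"
    unfolding aa_def
  proof (rule sum.cong[OF refl])
    fix m' show "P ?s m' * (if cc ?s mR m' then 1 else 0) = (if m' = mL then 1 else 0) * P ?s m'"
      using ccv star_P_other[of m' mL mR] d by (cases "m' = mL \<or> m' = mR") auto
  qed
  then show "aa (sigma_L mL mR) mR = q" using sum_delta_mult[of mL "P ?s"] star_P_L[OF d, of "xi_L mR"] unfolding sigma_L_def by simp
qed

lemma aa_R: assumes d: "(mL::'m::finite) \<noteq> mR"
  shows "aa (sigma_R mL mR) mL = q" "aa (sigma_R mL mR) mR = 0"
proof -
  let ?s = "(mu_star mL mR, xi_R mL)"
  have ccv: "cc ?s mL mL" "\<not> cc ?s mL mR" "\<not> cc ?s mR mL" "\<not> cc ?s mR mR"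
    using d by (auto simp: cc_def isL_iff star_SupL[OF d] star_SupR[OF d] xi_R_def)
  have "aa ?s mL = (\<Sum>m'\<in>UNIV. (if m' = mL then 1 else 0) * P ?s m')"
    unfolding aa_def
  proof (rule sum.cong[OF refl])
    fix m' show "P ?s m' * (if cc ?s mL m' then 1 else 0) = (if m' = mL then 1 else 0) * P ?s m'"
      using ccv star_P_other[of m' mL mR] d by (cases "m' = mL \<or> m' = mR") auto
  qed
  then show "aa (sigma_R mL mR) mL = q" using sum_delta_mult[of mL "P ?s"] star_P_L[OF d, of "xi_R mL"] unfolding sigma_R_def by simp
  have "aa ?s mR = 0"
    unfolding aa_def
  proof (rule sum.neutral, rule ballI)
    fix m' show "P ?s m' * (if cc ?s mR m' then 1 else 0) = 0"
      using ccv star_P_other[of m' mL mR] d by (cases "m' = mL \<or> m' = mR") auto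
  qed
  then show "aa (sigma_R mL mR) mR = 0" unfolding sigma_R_def by simp
qed

lemma tot_L: "(mL::'m::finite) \<noteq> mR \<Longrightarrow> pi_tot f (sigma_L mL mR) (sigma_L mL mR) = Wf 1 q"
  using star_tot[of mL mR "xi_L mR"] coordL[of mL mR] aa_L[of mL mR]
  unfolding sigma_L_def by (auto simp: xi_L_def)

lemma tot_R: "(mL::'m::finite) \<noteq> mR \<Longrightarrow> pi_tot f (sigma_R mL mR) (sigma_R mL mR) = Wf q 0"
  using star_tot[of mL mR "xi_R mL"] coordR[of mL mR] aa_R[of mL mR]
  unfolding sigma_R_def by (auto simp: xi_R_def)

end

theorem mainTheorem6:
  fixes f :: "real \<Rightarrow> real" and \<sigma> :: "'m::finite strat" and mL mR :: 'm
  assumes card_M: "CARD('m) \<ge> 4"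
    and f_meas: "f \<in> borel_measurable lborel"
    and f_pos: "\<forall>u\<in>{0..1}. f u > 0"
    and f_int: "set_integrable lborel {0..1} f"
    and f_one: "(LINT u:{0..1}|lborel. f u) = 1"
    and distinct_msgs: "mL \<noteq> mR"
    and eq: "equilibrium f \<sigma>"
    and coord: "coordinated f \<sigma>"
  shows "pi_tot f \<sigma> \<sigma> \<le> max (pi_tot f (sigma_L mL mR) (sigma_L mL mR)) (pi_tot f (sigma_R mL mR) (sigma_R mL mR))"
proof -
  interpret game f using f_meas f_pos f_int f_one by unfold_locales
  have s: "\<sigma> \<in> Sigma_set" and eqm: "\<forall>u\<in>{0..1}. \<forall>\<sigma>'\<in>Sigma_set. pi_u f \<sigma>' \<sigma> u \<le> pi_u f \<sigma> \<sigma> u"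
    using eq unfolding equilibrium_def by auto
  obtain A B where AB: "pi_tot f \<sigma> \<sigma> = Wf A B" "q*A \<le> q*q + (1-q)*B" "A \<le> 1" "0 \<le> B"
    using eq_bound[OF s coord eqm] by blast
  have "c0 + A*alpha + B*beta \<le> max (c0 + 1*alpha + q*beta) (c0 + q*alpha + 0*beta)"
    by (rule final_arith) (use alpha_nonneg beta_nonpos q_bounds AB in auto)
  then show ?thesis
    unfolding AB(1) tot_L[OF distinct_msgs] tot_R[OF distinct_msgs] Wf_lin .
qed

end
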